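(* Let $(\Xi,\Xi^\infty)$ and $(\Lambda,\Lambda^\infty)$ be countable approximate groups, and let $f:\Xi^\infty\to\Lambda^\infty$ be a function with $f(\Xi)\subseteq\Lambda$ which is a quasimorphism (its defect set $D(f)=\{f(y)^{-1}f(x)^{-1}f(xy)\mid x,y\in\Xi^\infty\}$ is finite) and is symmetric ($f(x^{-1})=f(x)^{-1}$ for all $x\in\Xi^\infty$). Let $d$ and $d'$ be left-invariant proper metrics on $\Xi^\infty$ and $\Lambda^\infty$ respectively. Then the restriction $f|_\Xi:(\Xi,d|_{\Xi\times\Xi})\to(\Lambda,d'|_{\Lambda\times\Lambda})$ is coarsely Lipschitz, i.e. for every $t>0$ there is $s>0$ such that $d(\xi,\eta)\leq t$ with $\xi,\eta\in\Xi$ implies $d'(f(\xi),f(\eta))\leq s$.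
   Context: A subset $\Lambda$ of a group $G$ is an approximate subgroup if $\Lambda=\Lambda^{-1}$, $e\in\Lambda$, and there is a finite $F\subset G$ with $\Lambda^2\subseteq\Lambda F$. Its enveloping group is $\Lambda^\infty=\bigcup_{k\in\mathbb N}\Lambda^k$; $(\Lambda,\Lambda^\infty)$ is called an approximate group, countable if $\Lambda$ is countable. Countable groups are regarded as discrete; a metric is proper if closed balls are compact. *)

theory Defs
  imports "HOL-Algebra.Algebra"
begin

fun set_pow :: "('a, 'b) monoid_scheme \<Rightarrow> 'a set \<Rightarrow> nat \<Rightarrow> 'a set" where
  "set_pow G L 0 = {\<one>\<^bsub>G\<^esub>}"
| "set_pow G L (Suc k) = L <#>\<^bsub>G\<^esub> set_pow G L k"

definition enveloping :: "('a, 'b) monoid_scheme \<Rightarrow> 'a set \<Rightarrow> 'a set" where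
  "enveloping G L = (\<Union>k. set_pow G L k)"

definition approx_subgroup :: "('a, 'b) monoid_scheme \<Rightarrow> 'a set \<Rightarrow> bool" where
  "approx_subgroup G L \<longleftrightarrow> L \<subseteq> carrier G \<and> set_inv\<^bsub>G\<^esub> L = L \<and> \<one>\<^bsub>G\<^esub> \<in> L \<and>
     (\<exists>F. finite F \<and> F \<subseteq> carrier G \<and> L <#>\<^bsub>G\<^esub> L \<subseteq> L <#>\<^bsub>G\<^esub> F)"

definition countable_approx_group :: "('a, 'b) monoid_scheme \<Rightarrow> 'a set \<Rightarrow> bool" where
  "countable_approx_group G L \<longleftrightarrow> group G \<and> approx_subgroup G L \<and> countable L"

definition metric_on :: "'a set \<Rightarrow> ('a \<Rightarrow> 'a \<Rightarrow> real) \<Rightarrow> bool" where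
  "metric_on S d \<longleftrightarrow> (\<forall>x\<in>S. \<forall>y\<in>S. d x y \<ge> 0 \<and> (d x y = 0 \<longleftrightarrow> x = y) \<and> d x y = d y x) \<and>
     (\<forall>x\<in>S. \<forall>y\<in>S. \<forall>z\<in>S. d x z \<le> d x y + d y z)"

definition left_invariant_on :: "('a, 'b) monoid_scheme \<Rightarrow> 'a set \<Rightarrow> ('a \<Rightarrow> 'a \<Rightarrow> real) \<Rightarrow> bool" where
  "left_invariant_on G S d \<longleftrightarrow> (\<forall>g\<in>S. \<forall>x\<in>S. \<forall>y\<in>S. d (g \<otimes>\<^bsub>G\<^esub> x) (g \<otimes>\<^bsub>G\<^esub> y) = d x y)"

text \<open>Proper: closed balls are compact; the countable group carries the discrete
  topology, so compact means finite.\<close>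
definition proper_metric_on :: "'a set \<Rightarrow> ('a \<Rightarrow> 'a \<Rightarrow> real) \<Rightarrow> bool" where
  "proper_metric_on S d \<longleftrightarrow> metric_on S d \<and> (\<forall>x\<in>S. \<forall>r. finite {y\<in>S. d x y \<le> r})"

definition defect_set ::
  "('a, 'b) monoid_scheme \<Rightarrow> ('c, 'd) monoid_scheme \<Rightarrow> 'a set \<Rightarrow> ('a \<Rightarrow> 'c) \<Rightarrow> 'c set" where
  "defect_set G H S f = {inv\<^bsub>H\<^esub> (f y) \<otimes>\<^bsub>H\<^esub> inv\<^bsub>H\<^esub> (f x) \<otimes>\<^bsub>H\<^esub> f (x \<otimes>\<^bsub>G\<^esub> y) | x y. x \<in> S \<and> y \<in> S}"

definition quasimorphism_on ::
  "('a, 'b) monoid_scheme \<Rightarrow> ('c, 'd) monoid_scheme \<Rightarrow> 'a set \<Rightarrow> ('a \<Rightarrow> 'c) \<Rightarrow> bool" where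
  "quasimorphism_on G H S f \<longleftrightarrow> finite (defect_set G H S f)"

definition symmetric_on ::
  "('a, 'b) monoid_scheme \<Rightarrow> ('c, 'd) monoid_scheme \<Rightarrow> 'a set \<Rightarrow> ('a \<Rightarrow> 'c) \<Rightarrow> bool" where
  "symmetric_on G H S f \<longleftrightarrow> (\<forall>x\<in>S. f (inv\<^bsub>G\<^esub> x) = inv\<^bsub>H\<^esub> (f x))"

end

theory Submission
  imports Defs
begin

lemma set_pow_carrier:
  assumes "group G" "L \<subseteq> carrier G"
  shows "set_pow G L k \<subseteq> carrier G"
proof (induction k)
  case 0 then show ?case using assms by (simp add: group.is_monoid monoid.one_closed)
next
  case (Suc k) then show ?case using assms
    by (auto simp: set_mult_def intro!: monoid.m_closed[OF group.is_monoid[OF assms(1)]])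
qed

lemma env_carrier:
  assumes "group G" "L \<subseteq> carrier G"
  shows "enveloping G L \<subseteq> carrier G"
  using set_pow_carrier[OF assms] unfolding enveloping_def by blast

lemma env_one: "\<one>\<^bsub>G\<^esub> \<in> enveloping G L"
  unfolding enveloping_def by (auto intro: exI[of _ 0])

lemma env_mem:
  assumes "group G" "L \<subseteq> carrier G" "a \<in> L"
  shows "a \<in> enveloping G L"
proof -
  have "a \<otimes>\<^bsub>G\<^esub> \<one>\<^bsub>G\<^esub> \<in> set_pow G L 1"
    by (auto simp: set_mult_def intro!: bexI[OF _ assms(3)])
  moreover have "a \<otimes>\<^bsub>G\<^esub> \<one>\<^bsub>G\<^esub> = a" using assms by (meson group.is_monoid monoid.r_one subsetD)
  ultimately have "a \<in> set_pow G L 1" by simp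
  then show ?thesis unfolding enveloping_def by blast
qed

lemma env_mem2:
  assumes "group G" "L \<subseteq> carrier G" "a \<in> L" "b \<in> L"
  shows "a \<otimes>\<^bsub>G\<^esub> b \<in> enveloping G L"
proof -
  have "a \<otimes>\<^bsub>G\<^esub> (b \<otimes>\<^bsub>G\<^esub> \<one>\<^bsub>G\<^esub>) \<in> set_pow G L 2"
    using assms(3,4) by (auto simp: set_mult_def numeral_2_eq_2)
  moreover have "b \<otimes>\<^bsub>G\<^esub> \<one>\<^bsub>G\<^esub> = b" using assms by (meson group.is_monoid monoid.r_one subsetD)
  ultimately show ?thesis unfolding enveloping_def by auto
qed

lemma inv_in_L:
  assumes "approx_subgroup G L" "a \<in> L"
  shows "inv\<^bsub>G\<^esub> a \<in> L"
proof -
  have "set_inv\<^bsub>G\<^esub> L = L" using assms(1) by (simp add: approx_subgroup_def)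
  then show ?thesis using assms(2) unfolding SET_INV_def by blast
qed

theorem lemma5p1:
  fixes G :: "('a, 'b) monoid_scheme" and H :: "('c, 'e) monoid_scheme"
    and Xi :: "'a set" and Lam :: "'c set" and f :: "'a \<Rightarrow> 'c"
    and d :: "'a \<Rightarrow> 'a \<Rightarrow> real" and d' :: "'c \<Rightarrow> 'c \<Rightarrow> real"
  assumes "countable_approx_group G Xi"
    and "countable_approx_group H Lam"
    and "f \<in> enveloping G Xi \<rightarrow> enveloping H Lam"
    and "f ` Xi \<subseteq> Lam"
    and "quasimorphism_on G H (enveloping G Xi) f"
    and "symmetric_on G H (enveloping G Xi) f"
    and "proper_metric_on (enveloping G Xi) d" and "left_invariant_on G (enveloping G Xi) d"
    and "proper_metric_on (enveloping H Lam) d'" and "left_invariant_on H (enveloping H Lam) d'"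
  shows "\<forall>t>0. \<exists>s>0. \<forall>\<xi>\<in>Xi. \<forall>\<eta>\<in>Xi. d \<xi> \<eta> \<le> t \<longrightarrow> d' (f \<xi>) (f \<eta>) \<le> s"
proof (intro allI impI)
  fix t :: real assume "t > 0"
  have gG: "group G" and aG: "approx_subgroup G Xi" using assms(1) by (auto simp: countable_approx_group_def)
  have gH: "group H" and aH: "approx_subgroup H Lam" using assms(2) by (auto simp: countable_approx_group_def)
  have XiC: "Xi \<subseteq> carrier G" using aG by (simp add: approx_subgroup_def)
  have LamC: "Lam \<subseteq> carrier H" using aH by (simp add: approx_subgroup_def)
  define E where "E = enveloping G Xi"
  define EH where "EH = enveloping H Lam"
  define B where "B = {y\<in>E. d \<one>\<^bsub>G\<^esub> y \<le> t}"
  have finB: "finite B" using assms(7) env_one unfolding B_def E_def proper_metric_on_def by blast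
  define D where "D = defect_set G H E f"
  have finD: "finite D" using assms(5) unfolding D_def E_def quasimorphism_on_def .
  define F where "F = (\<lambda>(a, \<delta>). f a \<otimes>\<^bsub>H\<^esub> inv\<^bsub>H\<^esub> \<delta>) ` (B \<times> D)"
  have finF: "finite F" unfolding F_def using finB finD by simp
  define s where "s = 1 + Max (insert 0 ((\<lambda>z. \<bar>d' \<one>\<^bsub>H\<^esub> z\<bar>) ` F))"
  have sM: "\<And>z. z \<in> F \<Longrightarrow> d' \<one>\<^bsub>H\<^esub> z \<le> s"
  proof -
    fix z assume "z \<in> F"
    hence "\<bar>d' \<one>\<^bsub>H\<^esub> z\<bar> \<le> Max (insert 0 ((\<lambda>z. \<bar>d' \<one>\<^bsub>H\<^esub> z\<bar>) ` F))" using finF by (intro Max_ge) auto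
    thus "d' \<one>\<^bsub>H\<^esub> z \<le> s" unfolding s_def by linarith
  qed
  have s0: "s > 0"
  proof -
    have "0 \<le> Max (insert 0 ((\<lambda>z. \<bar>d' \<one>\<^bsub>H\<^esub> z\<bar>) ` F))" using finF by (intro Max_ge) auto
    then show ?thesis unfolding s_def by linarith
  qed
  show "\<exists>s>0. \<forall>\<xi>\<in>Xi. \<forall>\<eta>\<in>Xi. d \<xi> \<eta> \<le> t \<longrightarrow> d' (f \<xi>) (f \<eta>) \<le> s"
  proof (intro exI[of _ s] conjI s0 ballI impI)
    fix \<xi> \<eta> assume xi: "\<xi> \<in> Xi" and eta: "\<eta> \<in> Xi" and dt: "d \<xi> \<eta> \<le> t"
    have ixi: "inv\<^bsub>G\<^esub> \<xi> \<in> Xi" using inv_in_L[OF aG xi] .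
    have xiE: "\<xi> \<in> E" "\<eta> \<in> E" "inv\<^bsub>G\<^esub> \<xi> \<in> E" using env_mem[OF gG XiC] xi eta ixi unfolding E_def by auto
    have pE: "inv\<^bsub>G\<^esub> \<xi> \<otimes>\<^bsub>G\<^esub> \<eta> \<in> E" using env_mem2[OF gG XiC ixi eta] unfolding E_def .
    have "d (inv\<^bsub>G\<^esub> \<xi> \<otimes>\<^bsub>G\<^esub> \<xi>) (inv\<^bsub>G\<^esub> \<xi> \<otimes>\<^bsub>G\<^esub> \<eta>) = d \<xi> \<eta>"
      using assms(8) xiE unfolding left_invariant_on_def E_def by blast
    moreover have "inv\<^bsub>G\<^esub> \<xi> \<otimes>\<^bsub>G\<^esub> \<xi> = \<one>\<^bsub>G\<^esub>" using gG xi XiC by (meson group.l_inv subsetD)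
    ultimately have inB: "inv\<^bsub>G\<^esub> \<xi> \<otimes>\<^bsub>G\<^esub> \<eta> \<in> B" unfolding B_def using pE dt by auto
    define \<delta> where "\<delta> = inv\<^bsub>H\<^esub> (f \<eta>) \<otimes>\<^bsub>H\<^esub> inv\<^bsub>H\<^esub> (f (inv\<^bsub>G\<^esub> \<xi>)) \<otimes>\<^bsub>H\<^esub> f (inv\<^bsub>G\<^esub> \<xi> \<otimes>\<^bsub>G\<^esub> \<eta>)"
    have dD: "\<delta> \<in> D" unfolding D_def defect_set_def \<delta>_def using xiE by blast
    have fs: "f (inv\<^bsub>G\<^esub> \<xi>) = inv\<^bsub>H\<^esub> (f \<xi>)" using assms(6) xiE unfolding symmetric_on_def E_def by blast
    have fxi: "f \<xi> \<in> Lam" "f \<eta> \<in> Lam" using assms(4) xi eta by auto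
    have fxiC: "f \<xi> \<in> carrier H" "f \<eta> \<in> carrier H" using fxi LamC by auto
    have fpC: "f (inv\<^bsub>G\<^esub> \<xi> \<otimes>\<^bsub>G\<^esub> \<eta>) \<in> carrier H"
      using assms(3) pE env_carrier[OF gH LamC] unfolding E_def by blast
    have eq: "inv\<^bsub>H\<^esub> (f \<xi>) \<otimes>\<^bsub>H\<^esub> f \<eta> = f (inv\<^bsub>G\<^esub> \<xi> \<otimes>\<^bsub>G\<^esub> \<eta>) \<otimes>\<^bsub>H\<^esub> inv\<^bsub>H\<^esub> \<delta>"
    proof -
      interpret H: group H by (rule gH)
      let ?p = "f (inv\<^bsub>G\<^esub> \<xi> \<otimes>\<^bsub>G\<^esub> \<eta>)"
      have "inv\<^bsub>H\<^esub> \<delta> = inv\<^bsub>H\<^esub> ?p \<otimes>\<^bsub>H\<^esub> (inv\<^bsub>H\<^esub> (f \<xi>) \<otimes>\<^bsub>H\<^esub> f \<eta>)"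
        unfolding \<delta>_def fs using fxiC fpC by (simp add: H.inv_mult_group H.m_assoc)
      then have "?p \<otimes>\<^bsub>H\<^esub> inv\<^bsub>H\<^esub> \<delta> = (?p \<otimes>\<^bsub>H\<^esub> inv\<^bsub>H\<^esub> ?p) \<otimes>\<^bsub>H\<^esub> (inv\<^bsub>H\<^esub> (f \<xi>) \<otimes>\<^bsub>H\<^esub> f \<eta>)"
        using fxiC fpC by (simp add: H.m_assoc[symmetric])
      also have "\<dots> = inv\<^bsub>H\<^esub> (f \<xi>) \<otimes>\<^bsub>H\<^esub> f \<eta>" using fxiC fpC by simp
      finally show ?thesis by simp
    qed
    have inF: "inv\<^bsub>H\<^esub> (f \<xi>) \<otimes>\<^bsub>H\<^esub> f \<eta> \<in> F" unfolding eq F_def using inB dD by force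
    have ifxi: "inv\<^bsub>H\<^esub> (f \<xi>) \<in> Lam" using inv_in_L[OF aH fxi(1)] .
    have EHs: "f \<xi> \<in> EH" "f \<eta> \<in> EH" "inv\<^bsub>H\<^esub> (f \<xi>) \<in> EH"
      using env_mem[OF gH LamC] fxi ifxi unfolding EH_def by auto
    have "d' (inv\<^bsub>H\<^esub> (f \<xi>) \<otimes>\<^bsub>H\<^esub> f \<xi>) (inv\<^bsub>H\<^esub> (f \<xi>) \<otimes>\<^bsub>H\<^esub> f \<eta>) = d' (f \<xi>) (f \<eta>)"
      using assms(10) EHs unfolding left_invariant_on_def EH_def by blast
    moreover have "inv\<^bsub>H\<^esub> (f \<xi>) \<otimes>\<^bsub>H\<^esub> f \<xi> = \<one>\<^bsub>H\<^esub>" using gH fxiC by (meson group.l_inv)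
    ultimately show "d' (f \<xi>) (f \<eta>) \<le> s" using sM[OF inF] by simp
  qed
qed

end
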